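(* Let $G$ be a finite connected multigraph without self-loops, with boundary vertex $\partial$ and a collection of nonnegative generic weights $w$ on $\vec E$; let $T^*=T^*(w)$ be the MSA of $(G,\partial)$. Fix a vertex $v$ with outgoing edges $\vec e_1,\ldots,\vec e_d$, let $u=(\vec e_2)_+$, and suppose $\vec e_1\in T^*$ and $v\notin\mathfrak F_{T^*}(u)$. Let $\Sigma=\Sigma(u,v)$ be the set of endpoints of the edges of $(\mathfrak F_{T^*}(u)\cup\mathfrak F_{T^*}(v))\setminus(\mathfrak F_{T^*}(u)\cap\mathfrak F_{T^*}(v))$ other than $u\wedge v$. Let $\vec E_\Sigma$ be the set of all oriented edges whose tail lies in $\Sigma$, and $M_\Sigma=\max\{w(\vec e):\vec e\in\vec E_\Sigma\}$. Let $w'$ be a generic collection of weights with $$w'(\vec e)\ \ge 2M_\Sigma\ \text{ if }\vec e\in\vec E_\Sigma\setminus(T^*\cup\{\vec e_2\})\text{ or }\vec e=\vec e_1,\qquad w'(\vec e)=w(\vec e)\ \text{ otherwise}.$$ Then $T'=(T^*\setminus\{\vec e_1\})\cup\{\vec e_2\}$ is the MSA of $(G,\partial)$ for the weights $w'$.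
   Context: $\vec E$ is the set of oriented edges (both orientations of each edge); $\vec e_-$ tail, $\vec e_+$ head. Weights $(W_x)_{x\in N}$ are generic if $\sum_{x\in S}n_xW_x\ne0$ for all finite $S$ and integers $n_x$ not all zero. A spanning arborescence of $(G,\partial)$ is a set of oriented edges without oriented cycles in which every vertex except $\partial$ has exactly one outgoing edge and $\partial$ none; the MSA is the (unique for generic weights) one of minimal total weight. For a spanning arborescence $T$, $\mathfrak F_T(x)$ (the future of $x$) is the oriented path in $T$ from $x$ to $\partial$, viewed as a set of oriented edges; $u\wedge v$ is the first vertex at which $\mathfrak F_T(u)$ and $\mathfrak F_T(v)$ merge. *)

theory Defs
  imports Complex_Main
begin

text \<open>A finite multigraph: vertex set V, edge set E (edges of an abstract type, so
parallel edges are allowed), and endpoints ends e = (a,b).  An oriented edge is a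
pair (e, b): b = True means orientation from fst (ends e) to snd (ends e),
b = False the reverse.\<close>

type_synonym 'e oedge = "'e \<times> bool"

definition otail :: "('e \<Rightarrow> 'v \<times> 'v) \<Rightarrow> 'e oedge \<Rightarrow> 'v" where
  "otail ends a = (if snd a then fst (ends (fst a)) else snd (ends (fst a)))"

definition ohead :: "('e \<Rightarrow> 'v \<times> 'v) \<Rightarrow> 'e oedge \<Rightarrow> 'v" where
  "ohead ends a = (if snd a then snd (ends (fst a)) else fst (ends (fst a)))"

definition oedges :: "'e set \<Rightarrow> 'e oedge set" where
  "oedges E = E \<times> UNIV"

definition multigraph_no_loops :: "'v set \<Rightarrow> 'e set \<Rightarrow> ('e \<Rightarrow> 'v \<times> 'v) \<Rightarrow> bool" where
  "multigraph_no_loops V E ends \<longleftrightarrow> finite V \<and> finite E \<and>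
     (\<forall>e\<in>E. fst (ends e) \<in> V \<and> snd (ends e) \<in> V \<and> fst (ends e) \<noteq> snd (ends e))"

definition connected_graph :: "'v set \<Rightarrow> 'e set \<Rightarrow> ('e \<Rightarrow> 'v \<times> 'v) \<Rightarrow> bool" where
  "connected_graph V E ends \<longleftrightarrow>
     (\<forall>x\<in>V. \<forall>y\<in>V. (x, y) \<in> ({ends e | e. e \<in> E} \<union> {prod.swap (ends e) | e. e \<in> E})\<^sup>*)"

definition generic :: "'e set \<Rightarrow> ('e oedge \<Rightarrow> real) \<Rightarrow> bool" where
  "generic E w \<longleftrightarrow> (\<forall>n :: 'e oedge \<Rightarrow> int.
      (\<exists>x\<in>oedges E. n x \<noteq> 0) \<longrightarrow> (\<Sum>x\<in>oedges E. of_int (n x) * w x) \<noteq> 0)"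

definition arc_rel :: "('e \<Rightarrow> 'v \<times> 'v) \<Rightarrow> 'e oedge set \<Rightarrow> ('v \<times> 'v) set" where
  "arc_rel ends T = {(otail ends a, ohead ends a) | a. a \<in> T}"

definition spanning_arborescence ::
  "'v set \<Rightarrow> 'e set \<Rightarrow> ('e \<Rightarrow> 'v \<times> 'v) \<Rightarrow> 'v \<Rightarrow> 'e oedge set \<Rightarrow> bool" where
  "spanning_arborescence V E ends r T \<longleftrightarrow>
     T \<subseteq> oedges E \<and> acyclic (arc_rel ends T) \<and>
     (\<forall>x\<in>V - {r}. \<exists>!a. a \<in> T \<and> otail ends a = x) \<and>
     (\<forall>a\<in>T. otail ends a \<noteq> r)"

definition weight :: "('e oedge \<Rightarrow> real) \<Rightarrow> 'e oedge set \<Rightarrow> real" where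
  "weight w T = (\<Sum>a\<in>T. w a)"

text \<open>T is a minimum spanning arborescence (for generic weights it is unique).\<close>
definition is_MSA ::
  "'v set \<Rightarrow> 'e set \<Rightarrow> ('e \<Rightarrow> 'v \<times> 'v) \<Rightarrow> 'v \<Rightarrow> ('e oedge \<Rightarrow> real) \<Rightarrow> 'e oedge set \<Rightarrow> bool" where
  "is_MSA V E ends r w T \<longleftrightarrow> spanning_arborescence V E ends r T \<and>
     (\<forall>T'. spanning_arborescence V E ends r T' \<longrightarrow> weight w T \<le> weight w T')"

text \<open>Future of x in T: the oriented edges of the T-path from x to the root
(the edges of T whose tail is reachable from x along T).\<close>
definition future :: "('e \<Rightarrow> 'v \<times> 'v) \<Rightarrow> 'e oedge set \<Rightarrow> 'v \<Rightarrow> 'e oedge set" where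
  "future ends T x = {a \<in> T. (x, otail ends a) \<in> (arc_rel ends T)\<^sup>*}"

definition future_vertices :: "('e \<Rightarrow> 'v \<times> 'v) \<Rightarrow> 'e oedge set \<Rightarrow> 'v \<Rightarrow> 'v set" where
  "future_vertices ends T x = {y. (x, y) \<in> (arc_rel ends T)\<^sup>*}"

definition meet :: "('e \<Rightarrow> 'v \<times> 'v) \<Rightarrow> 'e oedge set \<Rightarrow> 'v \<Rightarrow> 'v \<Rightarrow> 'v" where
  "meet ends T u v = (THE z. z \<in> future_vertices ends T u \<inter> future_vertices ends T v \<and>
      (\<forall>y \<in> future_vertices ends T u \<inter> future_vertices ends T v.
          (z, y) \<in> (arc_rel ends T)\<^sup>*))"

definition Sigma_set :: "('e \<Rightarrow> 'v \<times> 'v) \<Rightarrow> 'e oedge set \<Rightarrow> 'v \<Rightarrow> 'v \<Rightarrow> 'v set" where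
  "Sigma_set ends T u v =
     (\<Union>a \<in> (future ends T u \<union> future ends T v) - (future ends T u \<inter> future ends T v).
        {otail ends a, ohead ends a}) - {meet ends T u v}"

end

theory Submission
  imports Defs
begin

lemma arc_rel_insert: "arc_rel ends (insert a T) = insert (otail ends a, ohead ends a) (arc_rel ends T)"
  unfolding arc_rel_def by blast

lemma arc_rel_mono: "T \<subseteq> T' \<Longrightarrow> arc_rel ends T \<subseteq> arc_rel ends T'"
  unfolding arc_rel_def by blast

lemma arc_relE: "(p,q) \<in> arc_rel ends T \<Longrightarrow> \<exists>a\<in>T. otail ends a = p \<and> ohead ends a = q"
  unfolding arc_rel_def by blast

lemma arc_relI: "a \<in> T \<Longrightarrow> (otail ends a, ohead ends a) \<in> arc_rel ends T"
  unfolding arc_rel_def by blast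

lemma finite_oedges: "finite E \<Longrightarrow> finite (oedges E)"
  unfolding oedges_def by simp

lemma finite_arc_rel: "finite T \<Longrightarrow> finite (arc_rel ends T)"
proof -
  assume "finite T"
  have "arc_rel ends T = (\<lambda>a. (otail ends a, ohead ends a)) ` T" unfolding arc_rel_def by blast
  thus ?thesis using \<open>finite T\<close> by simp
qed

lemma oedge_ends:
  assumes "multigraph_no_loops V E ends" "a \<in> oedges E"
  shows "otail ends a \<in> V" "ohead ends a \<in> V" "otail ends a \<noteq> ohead ends a"
  using assms unfolding multigraph_no_loops_def oedges_def otail_def ohead_def
  by (auto split: if_splits)

lemma sa_unique:
  assumes sa: "spanning_arborescence V E ends r T" and g: "multigraph_no_loops V E ends"
    and "a \<in> T" "b \<in> T" "otail ends a = otail ends b"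
  shows "a = b"
proof -
  have "a \<in> oedges E" using sa assms(3) unfolding spanning_arborescence_def by blast
  hence "otail ends a \<in> V" using oedge_ends[OF g] by blast
  moreover have "otail ends a \<noteq> r" using sa assms(3) unfolding spanning_arborescence_def by blast
  ultimately have "\<exists>!c. c \<in> T \<and> otail ends c = otail ends a"
    using sa unfolding spanning_arborescence_def by blast
  then obtain c where "\<And>d. d \<in> T \<and> otail ends d = otail ends a \<Longrightarrow> d = c" by blast
  thus ?thesis using assms(3,4,5) by metis
qed

lemma sa_single_valued:
  assumes sa: "spanning_arborescence V E ends r T" and g: "multigraph_no_loops V E ends"
  shows "single_valued (arc_rel ends T)"
  unfolding single_valued_def
proof (intro allI impI)
  fix p q q' assume "(p, q) \<in> arc_rel ends T" "(p, q') \<in> arc_rel ends T"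
  then obtain a b where "a \<in> T" "otail ends a = p" "ohead ends a = q"
    "b \<in> T" "otail ends b = p" "ohead ends b = q'" using arc_relE by metis
  thus "q = q'" using sa_unique[OF sa g] by metis
qed

lemma sa_wf_conv:
  assumes sa: "spanning_arborescence V E ends r T" and g: "multigraph_no_loops V E ends"
  shows "wf ((arc_rel ends T)\<inverse>)" "wf (arc_rel ends T)"
proof -
  have "finite T" using sa g finite_oedges[of E] finite_subset
    unfolding spanning_arborescence_def multigraph_no_loops_def by metis
  hence f: "finite (arc_rel ends T)" by (rule finite_arc_rel)
  have "acyclic (arc_rel ends T)" using sa unfolding spanning_arborescence_def by blast
  thus "wf ((arc_rel ends T)\<inverse>)" "wf (arc_rel ends T)"
    using f finite_acyclic_wf_converse finite_acyclic_wf by blast+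
qed

lemma sa_reach_root:
  assumes sa: "spanning_arborescence V E ends r T" and g: "multigraph_no_loops V E ends"
  shows "y \<in> V \<Longrightarrow> (y, r) \<in> (arc_rel ends T)\<^sup>*"
proof (induction y rule: wf_induct_rule[OF sa_wf_conv(1)[OF sa g]])
  case (1 y)
  show ?case
  proof (cases "y = r")
    case True thus ?thesis by simp
  next
    case False
    then obtain a where a: "a \<in> T" "otail ends a = y"
      using sa 1(2) unfolding spanning_arborescence_def by blast
    have aE: "a \<in> oedges E" using sa a unfolding spanning_arborescence_def by blast
    have st: "(y, ohead ends a) \<in> arc_rel ends T" using arc_relI[OF a(1), where ends=ends] a(2) by simp
    have "ohead ends a \<in> V" using oedge_ends[OF g aE] by simp
    hence "(ohead ends a, r) \<in> (arc_rel ends T)\<^sup>*" using 1(1) st by blast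
    thus ?thesis using st by (meson converse_rtrancl_into_rtrancl)
  qed
qed

lemma sa_out:
  assumes sa: "spanning_arborescence V E ends r T" and "z \<in> V" "z \<noteq> r"
  obtains a where "a \<in> T" "otail ends a = z"
proof -
  have "\<exists>!a. a \<in> T \<and> otail ends a = z" using sa assms(2,3) unfolding spanning_arborescence_def by blast
  thus ?thesis using that by blast
qed

lemma sa_swap:
  assumes sa: "spanning_arborescence V E ends r T" and g: "multigraph_no_loops V E ends"
    and a: "a \<in> T" and b: "b \<in> oedges E" "otail ends b = otail ends a"
    and ac: "acyclic (arc_rel ends (insert b (T - {a})))"
  shows "spanning_arborescence V E ends r (insert b (T - {a}))"
proof -
  let ?T = "insert b (T - {a})"
  have TE: "T \<subseteq> oedges E" using sa unfolding spanning_arborescence_def by blast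
  have s1: "?T \<subseteq> oedges E" using TE b by blast
  have nr: "\<forall>c\<in>T. otail ends c \<noteq> r" using sa unfolding spanning_arborescence_def by blast
  have s4: "\<forall>c\<in>?T. otail ends c \<noteq> r" using nr a b(2) by auto
  have s3: "\<forall>z\<in>V - {r}. \<exists>!c. c \<in> ?T \<and> otail ends c = z"
  proof
    fix z assume z: "z \<in> V - {r}"
    show "\<exists>!c. c \<in> ?T \<and> otail ends c = z"
    proof (cases "z = otail ends a")
      case True
      show ?thesis
      proof (rule ex1I[of _ b])
        show "b \<in> ?T \<and> otail ends b = z" using b True by simp
      next
        fix c assume c: "c \<in> ?T \<and> otail ends c = z"
        show "c = b"
        proof (rule ccontr)
          assume "c \<noteq> b"
          hence "c \<in> T" "c \<noteq> a" using c by auto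
          thus False using sa_unique[OF sa g \<open>c \<in> T\<close> a] c True by simp
        qed
      qed
    next
      case False
      obtain c where c: "c \<in> T" "otail ends c = z" using sa_out[OF sa] z by blast
      have ca: "c \<noteq> a" using c False by blast
      show ?thesis
      proof (rule ex1I[of _ c])
        show "c \<in> ?T \<and> otail ends c = z" using c ca by simp
      next
        fix d assume d: "d \<in> ?T \<and> otail ends d = z"
        have "d \<noteq> b" using d b(2) False by auto
        hence "d \<in> T" using d by simp
        thus "d = c" using sa_unique[OF sa g \<open>d \<in> T\<close> c(1)] d c(2) by simp
      qed
    qed
  qed
  show ?thesis unfolding spanning_arborescence_def using s1 ac s3 s4 by blast
qed
lemma meet_exists:
  fixes RT :: "('a*'a) set"
  assumes wfTT: "wf (RT\<^sup>+)" and ne: "r \<in> C" and sv: "single_valued RT" and u: "\<And>y. y \<in> C \<Longrightarrow> (u,y) \<in> RT\<^sup>*"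
  shows "\<exists>m\<in>C. \<forall>y\<in>C. (m,y) \<in> RT\<^sup>*"
proof -
    obtain m where m: "m \<in> C" and mmin: "\<And>c. (c, m) \<in> RT\<^sup>+ \<Longrightarrow> c \<notin> C"
      using wfE_min[OF wfTT ne] by blast
    have "\<forall>y\<in>C. (m, y) \<in> RT\<^sup>*"
    proof
      fix y assume y: "y \<in> C"
      have "(u,m) \<in> RT\<^sup>*" "(u,y) \<in> RT\<^sup>*" using m y u by auto
      hence "(m,y) \<in> RT\<^sup>* \<or> (y,m) \<in> RT\<^sup>*" using single_valued_confluent[OF sv] by blast
      thus "(m,y) \<in> RT\<^sup>*"
      proof
        assume "(y,m) \<in> RT\<^sup>*"
        hence "y = m \<or> (y,m) \<in> RT\<^sup>+" by (auto dest: rtranclD)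
        thus "(m,y) \<in> RT\<^sup>*" using mmin y by auto
      qed
    qed
    thus ?thesis using m by blast
qed

theorem mainTheorem11:
  fixes V :: "'v set" and E :: "'e set" and ends :: "'e \<Rightarrow> 'v \<times> 'v" and r :: 'v
    and w w' :: "'e oedge \<Rightarrow> real" and Tstar :: "'e oedge set"
    and v :: 'v and e1 e2 :: "'e oedge"
  assumes graph: "multigraph_no_loops V E ends"
    and conn: "connected_graph V E ends"
    and root: "r \<in> V"
    and nonneg: "\<forall>a\<in>oedges E. w a \<ge> 0"
    and gen: "generic E w"
    and msa: "is_MSA V E ends r w Tstar"
    and v_in: "v \<in> V"
    and e1: "e1 \<in> oedges E" "otail ends e1 = v"
    and e2: "e2 \<in> oedges E" "otail ends e2 = v"
    and e12: "e1 \<noteq> e2"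
    and e1_T: "e1 \<in> Tstar"
    and v_notin: "v \<notin> future_vertices ends Tstar (ohead ends e2)"
    and w'_big: "\<forall>a\<in>oedges E.
        (a \<in> {b \<in> oedges E. otail ends b \<in> Sigma_set ends Tstar (ohead ends e2) v} - (Tstar \<union> {e2})
          \<or> a = e1) \<longrightarrow>
        w' a \<ge> 2 * Max (w ` {b \<in> oedges E. otail ends b \<in> Sigma_set ends Tstar (ohead ends e2) v})"
    and w'_eq: "\<forall>a\<in>oedges E.
        \<not> (a \<in> {b \<in> oedges E. otail ends b \<in> Sigma_set ends Tstar (ohead ends e2) v} - (Tstar \<union> {e2})
          \<or> a = e1) \<longrightarrow> w' a = w a"
    and gen': "generic E w'"
  shows "is_MSA V E ends r w' ((Tstar - {e1}) \<union> {e2})"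
proof -
  define RT where "RT = arc_rel ends Tstar"
  define u where "u = ohead ends e2"
  define x where "x = ohead ends e1"
  define FVu where "FVu = future_vertices ends Tstar u"
  define FVv where "FVv = future_vertices ends Tstar v"
  have saT: "spanning_arborescence V E ends r Tstar" using msa unfolding is_MSA_def by blast
  have minT: "\<And>S. spanning_arborescence V E ends r S \<Longrightarrow> weight w Tstar \<le> weight w S"
    using msa unfolding is_MSA_def by blast
  have finE: "finite (oedges E)" using graph finite_oedges unfolding multigraph_no_loops_def by blast
  have TE: "Tstar \<subseteq> oedges E" using saT unfolding spanning_arborescence_def by blast
  have finT: "finite Tstar" using TE finE finite_subset by blast
  have acT: "acyclic RT" using saT unfolding spanning_arborescence_def RT_def by blast
  have antT: "antisym (RT\<^sup>*)" using acT acyclic_impl_antisym_rtrancl by blast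
  have svT: "single_valued RT" using sa_single_valued[OF saT graph] RT_def by simp
  have wfT: "wf RT" using sa_wf_conv(2)[OF saT graph] RT_def by simp
  have uV: "u \<in> V" using oedge_ends[OF graph e2(1)] u_def by simp
  have uv: "u \<noteq> v" using oedge_ends(3)[OF graph e2(1)] e2(2) u_def by simp
  have xv: "x \<noteq> v" using oedge_ends(3)[OF graph e1(1)] e1(2) x_def by simp
  have vx: "(v, x) \<in> RT" using arc_relI[OF e1_T, where ends=ends] e1(2) RT_def x_def by simp
  have vr: "v \<noteq> r" using saT e1_T e1(2) unfolding spanning_arborescence_def by blast
  have T_at_v: "\<And>a. a \<in> Tstar \<Longrightarrow> otail ends a = v \<Longrightarrow> a = e1"
    using sa_unique[OF saT graph] e1_T e1(2) by metis
  have e2T: "e2 \<notin> Tstar" using T_at_v e2(2) e12 by blast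
  have vnu: "(u, v) \<notin> RT\<^sup>*" using v_notin unfolding future_vertices_def u_def RT_def by simp
  have FVu_iff: "\<And>y. y \<in> FVu \<longleftrightarrow> (u,y) \<in> RT\<^sup>*" unfolding FVu_def future_vertices_def RT_def by simp
  have FVv_iff: "\<And>y. y \<in> FVv \<longleftrightarrow> (v,y) \<in> RT\<^sup>*" unfolding FVv_def future_vertices_def RT_def by simp
  have ur: "(u, r) \<in> RT\<^sup>*" using sa_reach_root[OF saT graph uV] RT_def by simp
  have vr': "(v, r) \<in> RT\<^sup>*" using sa_reach_root[OF saT graph v_in] RT_def by simp
  have exm: "\<exists>m. m \<in> FVu \<inter> FVv \<and> (\<forall>y\<in>FVu \<inter> FVv. (m, y) \<in> RT\<^sup>*)"
  proof -
    have ne: "r \<in> FVu \<inter> FVv" using ur vr' FVu_iff FVv_iff by simp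
    have wfTT: "wf (RT\<^sup>+)" using wfT wf_trancl by blast
    have uC: "\<And>y. y \<in> FVu \<inter> FVv \<Longrightarrow> (u,y) \<in> RT\<^sup>*" using FVu_iff by blast
    show ?thesis using meet_exists[OF wfTT ne svT uC] by blast
  qed
  define m where "m = meet ends Tstar u v"
  have mprop: "m \<in> FVu \<inter> FVv \<and> (\<forall>y\<in>FVu \<inter> FVv. (m, y) \<in> RT\<^sup>*)"
  proof -
    have ex1: "\<exists>!m. m \<in> FVu \<inter> FVv \<and> (\<forall>y\<in>FVu \<inter> FVv. (m, y) \<in> RT\<^sup>*)"
    proof (rule ex_ex1I[OF exm])
      fix m1 m2 assume "m1 \<in> FVu \<inter> FVv \<and> (\<forall>y\<in>FVu \<inter> FVv. (m1, y) \<in> RT\<^sup>*)"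
        "m2 \<in> FVu \<inter> FVv \<and> (\<forall>y\<in>FVu \<inter> FVv. (m2, y) \<in> RT\<^sup>*)"
      hence "(m1,m2) \<in> RT\<^sup>*" "(m2,m1) \<in> RT\<^sup>*" by auto
      thus "m1 = m2" using antT antisymD by metis
    qed
    have "m = (THE z. z \<in> FVu \<inter> FVv \<and> (\<forall>y\<in>FVu \<inter> FVv. (z, y) \<in> RT\<^sup>*))"
      unfolding m_def meet_def FVu_def FVv_def RT_def by simp
    thus ?thesis using theI'[OF ex1] by simp
  qed
  have mv: "m \<noteq> v" using mprop v_notin FVu_def u_def by auto
  define Sig where "Sig = Sigma_set ends Tstar u v"
  have sigI: "\<And>a y. a \<in> Tstar \<Longrightarrow> otail ends a = y \<Longrightarrow> (y \<in> FVu) \<noteq> (y \<in> FVv) \<Longrightarrow> y \<in> Sig"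
  proof -
    fix a y assume a: "a \<in> Tstar" "otail ends a = y" "(y \<in> FVu) \<noteq> (y \<in> FVv)"
    have "a \<in> future ends Tstar u \<longleftrightarrow> y \<in> FVu"
      using a unfolding future_def FVu_def future_vertices_def by auto
    moreover have "a \<in> future ends Tstar v \<longleftrightarrow> y \<in> FVv"
      using a unfolding future_def FVv_def future_vertices_def by auto
    ultimately have "a \<in> (future ends Tstar u \<union> future ends Tstar v) - (future ends Tstar u \<inter> future ends Tstar v)"
      using a(3) by blast
    moreover have "y \<noteq> meet ends Tstar u v" using mprop a(3) m_def by auto
    ultimately show "y \<in> Sig" unfolding Sig_def Sigma_set_def using a(2) by blast
  qed
  have vSig: "v \<in> Sig"
    using sigI[OF e1_T e1(2)] v_notin FVv_iff FVu_def u_def by auto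
  define ES where "ES = {b \<in> oedges E. otail ends b \<in> Sig}"
  define M where "M = Max (w ` ES)"
  define Exp where "Exp = (ES - (Tstar \<union> {e2})) \<union> {e1}"
  have finES: "finite ES" using finE unfolding ES_def by simp
  have e1ES: "e1 \<in> ES" using e1 vSig ES_def by simp
  have e2ES: "e2 \<in> ES" using e2 vSig ES_def by simp
  have wES: "\<And>b. b \<in> ES \<Longrightarrow> w b \<le> M" unfolding M_def using finES by simp
  have Mnn: "0 \<le> M" using wES[OF e1ES] nonneg e1(1) by fastforce
  have e1Exp: "e1 \<in> Exp" unfolding Exp_def by simp
  have ExpES: "Exp \<subseteq> ES" unfolding Exp_def using e1ES by blast
  have big: "\<And>a. a \<in> oedges E \<Longrightarrow> a \<in> Exp \<Longrightarrow> 2*M \<le> w' a"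
    using w'_big unfolding Exp_def ES_def M_def Sig_def u_def by blast
  have eqw: "\<And>a. a \<in> oedges E \<Longrightarrow> a \<notin> Exp \<Longrightarrow> w' a = w a"
    using w'_eq unfolding Exp_def ES_def M_def Sig_def u_def by blast
  define T' where "T' = insert e2 (Tstar - {e1})"
  have T'Exp: "T' \<inter> Exp = {}" unfolding T'_def Exp_def using e12 by blast
  have finT': "finite T'" using finT T'_def by simp
  have wT': "weight w' T' = weight w Tstar - w e1 + w e2"
  proof -
    have "weight w' T' = (\<Sum>a\<in>T'. w a)" unfolding weight_def
      using T'Exp eqw e2(1) TE T'_def by (intro sum.cong) auto
    also have "\<dots> = w e2 + (\<Sum>a\<in>Tstar - {e1}. w a)" unfolding T'_def using finT e2T by simp
    also have "(\<Sum>a\<in>Tstar. w a) = w e1 + (\<Sum>a\<in>Tstar - {e1}. w a)" using sum.remove[OF finT e1_T] by simp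
    ultimately show ?thesis unfolding weight_def by simp
  qed
  have saT': "spanning_arborescence V E ends r T'"
  proof -
    have arcT': "arc_rel ends T' = insert (v, u) (arc_rel ends (Tstar - {e1}))"
      unfolding T'_def using arc_rel_insert e2(2) u_def by metis
    have sub: "arc_rel ends (Tstar - {e1}) \<subseteq> RT" using arc_rel_mono[of "Tstar - {e1}" Tstar ends] RT_def by blast
    have ac1: "acyclic (arc_rel ends (Tstar - {e1}))" using acyclic_subset[OF acT sub] .
    have "(u, v) \<notin> (arc_rel ends (Tstar - {e1}))\<^sup>*" using vnu rtrancl_mono[OF sub] by blast
    hence s2: "acyclic (arc_rel ends T')" using ac1 arcT' by simp
    have "otail ends e2 = otail ends e1" using e1(2) e2(2) by simp
    from sa_swap[OF saT graph e1_T e2(1) this] s2 show ?thesis unfolding T'_def by simp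
  qed
  have "weight w' T' \<le> weight w' S" if saS: "spanning_arborescence V E ends r S" for S
  proof -
    have SE: "S \<subseteq> oedges E" using saS unfolding spanning_arborescence_def by blast
    have finS: "finite S" using SE finE finite_subset by blast
    show ?thesis
    proof (cases "S \<inter> Exp = {}")
      case False
      then obtain f where f: "f \<in> S" "f \<in> Exp" by blast
      have dnn: "\<And>a. a \<in> S \<Longrightarrow> 0 \<le> w' a - w a"
      proof -
        fix a assume a: "a \<in> S"
        show "0 \<le> w' a - w a"
        proof (cases "a \<in> Exp")
          case True
          have aE: "a \<in> oedges E" using a SE by blast
          have aES: "a \<in> ES" using ExpES True by blast
          have "2*M \<le> w' a" using big[OF aE True] .
          moreover have "w a \<le> M" using wES[OF aES] .
          ultimately show ?thesis using Mnn by linarith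
        next
          case False
          have "a \<in> oedges E" using a SE by blast
          thus ?thesis using eqw[of a] False by simp
        qed
      qed
      have fE: "f \<in> oedges E" using f SE by blast
      have fES: "f \<in> ES" using ExpES f by blast
      have "2*M \<le> w' f" using big[OF fE f(2)] .
      moreover have "w f \<le> M" using wES[OF fES] .
      ultimately have "M \<le> w' f - w f" by linarith
      also have "\<dots> \<le> (\<Sum>a\<in>S. w' a - w a)"
        by (rule member_le_sum[OF f(1) _ finS]) (use dnn in auto)
      also have "\<dots> = weight w' S - weight w S" unfolding weight_def by (simp add: sum_subtractf)
      finally have "weight w S + M \<le> weight w' S" by simp
      moreover have "weight w Tstar \<le> weight w S" using minT saS by blast
      moreover have "w e2 \<le> M" using wES e2ES by blast
      moreover have "0 \<le> w e1" using nonneg e1(1) by blast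
      ultimately show ?thesis using wT' by linarith
    next
      case True
      have wS: "weight w' S = weight w S" unfolding weight_def
        using True eqw SE by (intro sum.cong) auto
      obtain b where b: "b \<in> S" "otail ends b = v"
        using sa_out[OF saS v_in vr] by blast
      have "b \<in> ES" using b SE vSig ES_def by blast
      moreover have "b \<notin> Exp" using True b by blast
      ultimately have "b \<in> Tstar \<union> {e2}" "b \<noteq> e1" unfolding Exp_def by blast+
      hence "b = e2" using T_at_v b(2) by blast
      hence e2S: "e2 \<in> S" using b by simp
      have e1S: "e1 \<notin> S" using True e1Exp by blast
      have S_at_v: "\<And>a. a \<in> S \<Longrightarrow> otail ends a = v \<Longrightarrow> a = e2"
        using sa_unique[OF saS graph] e2S e2(2) by metis
      define R0 where "R0 = arc_rel ends (S - {e2})"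
      define RS where "RS = arc_rel ends S"
      have R0RS: "R0 \<subseteq> RS" unfolding R0_def RS_def using arc_rel_mono by blast
      have acS: "acyclic RS" using saS unfolding spanning_arborescence_def RS_def by blast
      have sv0: "single_valued R0" using sa_single_valued[OF saS graph] R0RS single_valued_subset RS_def by blast
      have path: "\<And>y. (y, m) \<in> RT\<^sup>* \<Longrightarrow> y \<in> FVu \<or> y \<in> FVv \<Longrightarrow> y \<noteq> v \<Longrightarrow> (y, m) \<in> R0\<^sup>*"
      proof -
        fix y assume "(y, m) \<in> RT\<^sup>*"
        then show "y \<in> FVu \<or> y \<in> FVv \<Longrightarrow> y \<noteq> v \<Longrightarrow> (y, m) \<in> R0\<^sup>*"
        proof (induction rule: converse_rtrancl_induct)
          case base thus ?case by simp
        next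
          case (step y y')
          have y'F: "y' \<in> FVu \<or> y' \<in> FVv" using step.prems(1) step.hyps(1) FVu_iff FVv_iff
            by (meson rtrancl_into_rtrancl)
          have y'v: "y' \<noteq> v"
          proof
            assume yv: "y' = v"
            show False
            proof (cases "y \<in> FVu")
              case True then have "(u, v) \<in> RT\<^sup>*" using step.hyps(1) yv FVu_iff by (meson rtrancl_into_rtrancl)
              thus False using vnu by simp
            next
              case False then have "y \<in> FVv" using step.prems(1) by simp
              hence "(v,y) \<in> RT\<^sup>*" using FVv_iff by simp
              hence "(v,v) \<in> RT\<^sup>+" using step.hyps(1) yv by (meson rtrancl_into_trancl1)
              thus False using acT unfolding acyclic_def by blast
            qed
          qed
          have IH: "(y', m) \<in> R0\<^sup>*" using step.IH y'F y'v by blast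
          show ?case
          proof (cases "y = m")
            case True thus ?thesis by simp
          next
            case False
            have ynC: "\<not> (y \<in> FVu \<and> y \<in> FVv)"
            proof
              assume "y \<in> FVu \<and> y \<in> FVv"
              hence "(m, y) \<in> RT\<^sup>*" using mprop by blast
              moreover have "(y, m) \<in> RT\<^sup>*" using step.hyps(1,2) by (meson converse_rtrancl_into_rtrancl)
              ultimately have "y = m" using antT antisymD by metis
              thus False using False by simp
            qed
            obtain a where a: "a \<in> Tstar" "otail ends a = y" "ohead ends a = y'"
              using step.hyps(1) arc_relE RT_def by metis
            have ySig: "y \<in> Sig" using sigI[OF a(1,2)] ynC step.prems(1) by blast
            have "y \<in> V" using a TE oedge_ends[OF graph] by blast
            moreover have "y \<noteq> r" using saT a unfolding spanning_arborescence_def by blast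
            ultimately obtain b where b: "b \<in> S" "otail ends b = y"
              using sa_out[OF saS] by blast
            have "b \<in> ES" using b SE ySig ES_def by blast
            moreover have "b \<notin> Exp" using True b by blast
            ultimately have "b \<in> Tstar \<union> {e2}" unfolding Exp_def by blast
            moreover have bne: "b \<noteq> e2" using b(2) e2(2) step.prems(2) by auto
            ultimately have "b \<in> Tstar" by simp
            hence "b = a" using sa_unique[OF saT graph] a b by metis
            hence "(y, y') \<in> R0" using b a bne arc_relI[of b "S - {e2}" ends] R0_def by simp
            thus ?thesis using IH by (meson converse_rtrancl_into_rtrancl)
          qed
        qed
      qed
      have xm: "(x, m) \<in> R0\<^sup>*"
      proof -
        have "(v, m) \<in> RT\<^sup>*" using mprop FVv_iff by blast
        hence "(v, m) \<in> RT\<^sup>+" using mv by (metis rtranclD)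
        then obtain z where z: "(v, z) \<in> RT" "(z, m) \<in> RT\<^sup>*" by (metis tranclD)
        hence "z = x" using vx svT single_valuedD by metis
        moreover have "x \<in> FVv" using vx FVv_iff by blast
        ultimately show ?thesis using path z xv by blast
      qed
      have um: "(u, m) \<in> R0\<^sup>*" using path mprop FVu_iff uv by blast
      define S'' where "S'' = insert e1 (S - {e2})"
      have saS'': "spanning_arborescence V E ends r S''"
      proof -
        have arcS: "arc_rel ends S'' = insert (v, x) R0"
          unfolding S''_def R0_def using arc_rel_insert e1(2) x_def by metis
        have nr: "(x, v) \<notin> R0\<^sup>*"
        proof
          assume xv0: "(x, v) \<in> R0\<^sup>*"
          hence "(v, m) \<in> R0\<^sup>* \<or> (m, v) \<in> R0\<^sup>*" using single_valued_confluent[OF sv0 xv0 xm] by blast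
          thus False
          proof
            assume "(v, m) \<in> R0\<^sup>*"
            hence "(v, m) \<in> R0\<^sup>+" using mv by (auto dest: rtranclD)
            then obtain z where "(v, z) \<in> R0" by (auto dest: tranclD)
            then obtain c where "c \<in> S - {e2}" "otail ends c = v" using arc_relE R0_def by metis
            thus False using S_at_v by blast
          next
            assume "(m, v) \<in> R0\<^sup>*"
            hence mv1: "(m, v) \<in> RS\<^sup>*" using rtrancl_mono[OF R0RS] by blast
            have vu1: "(v, u) \<in> RS" using arc_relI[OF e2S, where ends=ends] e2(2) u_def RS_def by simp
            have um1: "(u, m) \<in> RS\<^sup>*" using um rtrancl_mono[OF R0RS] by blast
            have "(v, m) \<in> RS\<^sup>+" using vu1 um1 by (rule rtrancl_into_trancl2)
            hence "(v, v) \<in> RS\<^sup>+" using mv1 by (rule trancl_rtrancl_trancl)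
            thus False using acS unfolding acyclic_def by blast
          qed
        qed
        have "acyclic R0" using acyclic_subset[OF acS R0RS] .
        hence s2: "acyclic (arc_rel ends S'')" using arcS nr by simp
        have "otail ends e1 = otail ends e2" using e1(2) e2(2) by simp
        from sa_swap[OF saS graph e2S e1(1) this] s2 show ?thesis unfolding S''_def by simp
      qed
      have "weight w S'' = w e1 + (weight w S - w e2)"
      proof -
        have fin2: "finite (S - {e2})" using finS by simp
        have n2: "e1 \<notin> S - {e2}" using e1S by simp
        have "weight w S'' = w e1 + (\<Sum>a\<in>S - {e2}. w a)" unfolding weight_def S''_def
          by (rule sum.insert[OF fin2 n2])
        moreover have "(\<Sum>a\<in>S. w a) = w e2 + (\<Sum>a\<in>S - {e2}. w a)" by (rule sum.remove[OF finS e2S])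
        ultimately show ?thesis unfolding weight_def by linarith
      qed
      moreover have "weight w Tstar \<le> weight w S''" by (rule minT[OF saS''])
      ultimately show ?thesis using wT' wS by linarith
    qed
  qed
  hence allS: "\<forall>S. spanning_arborescence V E ends r S \<longrightarrow> weight w' T' \<le> weight w' S" by blast
  have eqT: "(Tstar - {e1}) \<union> {e2} = T'" by (simp add: T'_def)
  show ?thesis unfolding is_MSA_def eqT using saT' allS by (rule conjI)
qed

end
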